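(* There is $J$ such that for all $j\ge J$ the following holds: if $a_{ij}$ and $a_{kl}$ are distinct points in the same cluster, with common potential $t$, then $$a_{kl}-a_{ij}=\frac{2\pi i\,(s_{k(l+H)}-s_{i(j+H)})}{d\,(F^{\circ H})'(t)}\,\nu\,\delta,$$ where $H=H(a_{ij},a_{kl})$, for some $\nu\in A_{t,H-1}$ and $\delta\in D_{i(j+H)}^{k(l+H)}$.
   Context: Setting: $d\ge1$, $f_0=p\circ\exp$ with $p$ monic of degree $d$; orbits $\mathcal{O}_i=\{a_{ij}\}_{j\ge0}$ of $f_0$ ($i=1,\dots,m$) escape on pairwise distinct dynamic rays; $P_f=\bigcup_i\mathcal{O}_i$. $t_{ij}$ is the potential of $a_{ij}$ and $s_{ij}$ the first entry of its external address, with $a_{ij}=t_{ij}+2\pi i s_{ij}/d+O(e^{-t_{ij}/2})$; potentials satisfy $t_{i(j+1)}=F(t_{ij})$ where $F(t)=e^{dt}-1$. Points $a_{ij},a_{kl}$ are in the same cluster if $t_{ij}=t_{kl}$ and $s_{ij}=s_{kl}$. For a pair in the same cluster, $H(a_{ij},a_{kl})$ is the smallest positive integer $H$ such that $a_{i(j+H)}$ and $a_{k(l+H)}$ lie in different clusters. $A_{x,n}$ is the set of $\alpha\neq0$ with $|\log|\alpha||<\sum_{r=0}^n e^{-F^r(x)/3}$ and $|\arg\alpha|<\sum_{r=0}^n e^{-F^r(x)/3}$. For $a_{ij},a_{kl}$ with equal potential in different clusters, $D_{ij}^{kl}:=\left\{\frac{d(w-z)}{2\pi i(s_{kl}-s_{ij})}: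 w\in\mathbb{D}_{1/l}(a_{kl}), z\in\mathbb{D}_{1/j}(a_{ij})\right\}$. *)

theory Defs
  imports "HOL-Analysis.Analysis" "HOL-Computational_Algebra.Polynomial"
begin

definition potF :: "nat \<Rightarrow> real \<Rightarrow> real" where
  "potF d x = exp (real d * x) - 1"

text \<open>Orbits are indexed by i (1..m) and time j; a i j is the point a_ij,
  t i j its potential, s i j the first entry of its external address.\<close>
definition same_cluster ::
  "(nat \<Rightarrow> nat \<Rightarrow> real) \<Rightarrow> (nat \<Rightarrow> nat \<Rightarrow> int) \<Rightarrow> nat \<Rightarrow> nat \<Rightarrow> nat \<Rightarrow> nat \<Rightarrow> bool" where
  "same_cluster t s i j k l \<longleftrightarrow> t i j = t k l \<and> s i j = s k l"

definition sepH ::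
  "(nat \<Rightarrow> nat \<Rightarrow> real) \<Rightarrow> (nat \<Rightarrow> nat \<Rightarrow> int) \<Rightarrow> nat \<Rightarrow> nat \<Rightarrow> nat \<Rightarrow> nat \<Rightarrow> nat" where
  "sepH t s i j k l = (LEAST H. 0 < H \<and> \<not> same_cluster t s i (j + H) k (l + H))"

definition Aset :: "nat \<Rightarrow> real \<Rightarrow> nat \<Rightarrow> complex set" where
  "Aset d x n = {\<alpha>. \<alpha> \<noteq> 0 \<and>
      \<bar>ln (cmod \<alpha>)\<bar> < (\<Sum>r = 0..n. exp (- ((potF d ^^ r) x) / 3)) \<and>
      \<bar>Arg \<alpha>\<bar> < (\<Sum>r = 0..n. exp (- ((potF d ^^ r) x) / 3))}"

definition Dset ::
  "nat \<Rightarrow> (nat \<Rightarrow> nat \<Rightarrow> complex) \<Rightarrow> (nat \<Rightarrow> nat \<Rightarrow> int) \<Rightarrow> nat \<Rightarrow> nat \<Rightarrow> nat \<Rightarrow> nat \<Rightarrow> complex set" where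
  "Dset d a s i j k l =
     {of_nat d * (w - z) / (2 * of_real pi * \<i> * of_int (s k l - s i j)) | w z.
        w \<in> ball (a k l) (1 / real l) \<and> z \<in> ball (a i j) (1 / real j)}"

end

theory Submission
  imports Defs
begin


lemma polyQ_bound:
  fixes p :: "complex poly" and d :: nat
  assumes d1: "d \<ge> 1" and lc: "lead_coeff p = 1" and deg: "degree p = d"
  shows "\<exists>K1\<ge>0. \<forall>w. 1 \<le> cmod w \<longrightarrow>
           cmod (poly (pderiv p) w * w - of_nat d * w ^ d) \<le> K1 * cmod w ^ (d - 1)"
proof -
  define Q where "Q = pCons 0 (pderiv p) - monom (of_nat d) d"
  have polyQ: "poly Q w = poly (pderiv p) w * w - of_nat d * w ^ d" for w
    by (simp add: Q_def poly_monom mult.commute)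
  have cQ: "coeff Q n = 0" if "n \<ge> d" for n
  proof (cases n)
    case 0 then show ?thesis using that d1 by simp
  next
    case (Suc n')
    have "coeff Q n = of_nat n * coeff p n - (if n = d then of_nat d else 0)"
      by (simp add: Q_def coeff_monom coeff_pderiv Suc)
    moreover have "n > d \<Longrightarrow> coeff p n = 0" using deg coeff_eq_0 by blast
    moreover have "coeff p d = 1" using lc deg by simp
    ultimately show ?thesis using that by auto
  qed
  have degQ: "degree Q \<le> d - 1"
    by (rule degree_le) (use cQ in auto)
  define K1 where "K1 = (\<Sum>i\<le>degree Q. cmod (coeff Q i))"
  have "cmod (poly Q w) \<le> K1 * cmod w ^ (d - 1)" if w1: "1 \<le> cmod w" for w
  proof -
    have "cmod (poly Q w) = cmod (\<Sum>i\<le>degree Q. coeff Q i * w ^ i)" by (simp add: poly_altdef)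
    also have "\<dots> \<le> (\<Sum>i\<le>degree Q. cmod (coeff Q i) * cmod w ^ i)"
      by (rule order_trans[OF norm_sum]) (simp add: norm_mult norm_power)
    also have "\<dots> \<le> (\<Sum>i\<le>degree Q. cmod (coeff Q i) * cmod w ^ (d - 1))"
      by (intro sum_mono mult_left_mono power_increasing) (use w1 degQ in auto)
    also have "\<dots> = K1 * cmod w ^ (d - 1)" by (simp add: K1_def sum_distrib_right)
    finally show ?thesis .
  qed
  moreover have "K1 \<ge> 0" by (simp add: K1_def sum_nonneg)
  ultimately show ?thesis using polyQ by metis
qed



lemma exp_minus_one_bound:
  fixes u :: complex assumes "cmod u \<le> 1"
  shows "cmod (exp u - 1) \<le> 3 * cmod u"
proof -
  have "cmod (exp u - 1) \<le> exp (cmod u) * cmod u"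
    using Taylor_exp_field[of u 0] by simp
  also have "\<dots> \<le> 3 * cmod u"
  proof (rule mult_right_mono)
    have "exp (cmod u) \<le> exp 1" using assms by simp
    also have "\<dots> \<le> 3" using exp_le by simp
    finally show "exp (cmod u) \<le> 3" .
  qed simp
  finally show ?thesis .
qed

lemma deriv_bound:
  fixes p :: "complex poly" and d :: nat and K1 C0 t :: real and s :: int and z :: complex
  assumes d1: "d \<ge> 1" and K1: "K1 \<ge> 0" and C0: "C0 \<ge> 0"
    and Qb: "\<forall>w. 1 \<le> cmod w \<longrightarrow> cmod (poly (pderiv p) w * w - of_nat d * w ^ d) \<le> K1 * cmod w ^ (d - 1)"
    and t1: "t \<ge> 1" and rho1: "d * (C0 * exp (- t / 2)) \<le> 1"
    and hz: "cmod (z - (of_real t + 2 * of_real pi * \<i> * of_int s / of_nat d)) \<le> C0 * exp (- t / 2)"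
  shows "cmod (poly (pderiv p) (exp z) * exp z - of_real (d * exp (d * t)))
          \<le> (d * exp (d * t)) * ((K1 * exp d + 3 * d * C0) * exp (- t / 2))"
proof -
  define c where "c = of_real t + 2 * of_real pi * \<i> * of_int s / of_nat d"
  define \<rho> where "\<rho> = C0 * exp (- t / 2)"
  define L where "L = d * exp (d * t)"
  have rho0: "\<rho> \<ge> 0" using C0 by (simp add: \<rho>_def)
  have rho_le: "\<rho> \<le> 1" using rho1 d1 rho0 unfolding \<rho>_def
    by (metis dual_order.trans mult_le_cancel_right1 not_less of_nat_1 of_nat_le_iff)
  have zc: "cmod (z - c) \<le> \<rho>" using hz by (simp add: c_def \<rho>_def)
  have Rec: "Re c = t" by (simp add: c_def)
  have "\<bar>Re z - t\<bar> \<le> \<rho>" using abs_Re_le_cmod[of "z - c"] zc Rec by simp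
  hence Rez: "t - 1 \<le> Re z" "Re z \<le> t + 1" using rho_le by auto
  define w where "w = exp z"
  have nw: "cmod w = exp (Re z)" by (simp add: w_def)
  have w1: "1 \<le> cmod w" using nw Rez t1 by simp
  have "cmod w ^ (d - 1) = exp (real (d - 1) * Re z)" using nw by (simp add: exp_of_nat_mult)
  also have "\<dots> \<le> exp (real (d - 1) * (t + 1))" using Rez by (simp add: mult_left_mono)
  also have "\<dots> \<le> exp (real d * t + real d - t)" using d1 by (simp add: of_nat_diff algebra_simps)
  also have "\<dots> = exp (real d * t) * exp (real d) * exp (- t)" by (simp add: exp_add exp_diff exp_minus field_simps)
  also have "\<dots> \<le> L * exp (real d) * exp (- t / 2)" unfolding L_def using d1 t1
    by (intro mult_mono) (auto)
  finally have wd: "cmod w ^ (d - 1) \<le> L * exp (real d) * exp (- t / 2)" .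
  have Qw: "cmod (poly (pderiv p) w * w - of_nat d * w ^ d) \<le> K1 * (L * exp (real d) * exp (- t / 2))"
    using Qb w1 wd K1 by (meson mult_left_mono order_trans)
  have edc: "exp (of_nat d * c) = of_real (exp (d * t))"
  proof -
    have "of_nat d * c = of_real (d * t) + of_real (2 * of_int s * pi) * \<i>"
      using d1 by (simp add: c_def field_simps)
    hence "exp (of_nat d * c) = exp (of_real (d * t)) * exp (of_real (2 * of_int s * pi) * \<i>)"
      by (simp add: exp_add)
    also have "exp (of_real (2 * of_int s * pi) * \<i>) = 1"
      using exp_integer_2pi[of "of_int s"] by simp
    finally show ?thesis by (simp only: exp_of_real mult_1_right)
  qed
  have wdz: "w ^ d = exp (of_nat d * c) * exp (of_nat d * (z - c))"
    by (simp add: w_def exp_of_nat_mult[symmetric] exp_add[symmetric] algebra_simps)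
  have dzc: "cmod (of_nat d * (z - c)) \<le> d * \<rho>"
    using zc by (simp add: norm_mult mult_left_mono)
  have "of_nat d * w ^ d - of_real L = of_real L * (exp (of_nat d * (z - c)) - 1)"
    unfolding wdz edc L_def by (simp add: algebra_simps)
  hence "cmod (of_nat d * w ^ d - of_real L) = L * cmod (exp (of_nat d * (z - c)) - 1)"
    using d1 by (simp add: norm_mult L_def)
  also have "\<dots> \<le> L * (3 * (d * \<rho>))"
    using exp_minus_one_bound[of "of_nat d * (z - c)"] dzc rho1 unfolding \<rho>_def
    by (intro mult_left_mono) (auto simp: L_def)
  finally have ed: "cmod (of_nat d * w ^ d - of_real L) \<le> L * (3 * (d * \<rho>))" .
  have "cmod (poly (pderiv p) w * w - of_real L)
      \<le> cmod (poly (pderiv p) w * w - of_nat d * w ^ d) + cmod (of_nat d * w ^ d - of_real L)"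
    by (rule order_trans[OF _ norm_triangle_ineq]) simp
  also have "\<dots> \<le> K1 * (L * exp (real d) * exp (- t / 2)) + L * (3 * (d * \<rho>))"
    using Qw ed by linarith
  also have "\<dots> = L * ((K1 * exp d + 3 * d * C0) * exp (- t / 2))"
    by (simp add: \<rho>_def algebra_simps)
  finally show ?thesis by (simp add: w_def L_def)
qed


lemma step_lemma:
  fixes p :: "complex poly" and d :: nat and K1 C0 t :: real and s :: int and x y :: complex
  assumes d1: "d \<ge> 1" and K1: "K1 \<ge> 0" and C0: "C0 \<ge> 0"
    and Qb: "\<forall>w. 1 \<le> cmod w \<longrightarrow> cmod (poly (pderiv p) w * w - of_nat d * w ^ d) \<le> K1 * cmod w ^ (d - 1)"
    and t1: "t \<ge> 1" and rho1: "d * (C0 * exp (- t / 2)) \<le> 1"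
    and hx: "cmod (x - (of_real t + 2 * of_real pi * \<i> * of_int s / of_nat d)) \<le> C0 * exp (- t / 2)"
    and hy: "cmod (y - (of_real t + 2 * of_real pi * \<i> * of_int s / of_nat d)) \<le> C0 * exp (- t / 2)"
    and small: "2 * ((K1 * exp d + 3 * d * C0) * exp (- t / 2)) < 1"
  shows "\<exists>lam. poly p (exp y) - poly p (exp x) = of_real (d * exp (d * t)) * (y - x) * exp lam
            \<and> cmod lam \<le> 2 * ((K1 * exp d + 3 * d * C0) * exp (- t / 2))"
proof -
  define c where "c = of_real t + 2 * of_real pi * \<i> * of_int s / of_nat d"
  define \<rho> where "\<rho> = C0 * exp (- t / 2)"
  define L where "L = d * exp (d * t)"
  define e where "e = (K1 * exp d + 3 * d * C0) * exp (- t / 2)"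
  have Lpos: "L > 0" using d1 by (simp add: L_def)
  have e0: "e \<ge> 0" using K1 C0 by (simp add: e_def)
  define f where "f = (\<lambda>z. poly p (exp z) - of_real L * z)"
  define f' where "f' = (\<lambda>z. poly (pderiv p) (exp z) * exp z - of_real L)"
  have df: "(f has_field_derivative f' z) (at z within cball c \<rho>)" for z
    unfolding f_def f'_def
    by (auto intro!: derivative_eq_intros)
  have bnd: "cmod (f' z) \<le> L * e" if "z \<in> cball c \<rho>" for z
    using deriv_bound[OF d1 K1 C0 Qb t1 rho1, where s=s and z=z] that
    by (simp add: f'_def L_def e_def c_def \<rho>_def dist_norm norm_minus_commute)
  have xin: "x \<in> cball c \<rho>" and yin: "y \<in> cball c \<rho>"
    using hx hy by (simp_all add: c_def \<rho>_def dist_norm norm_minus_commute)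
  have fb: "cmod (f y - f x) \<le> L * e * cmod (y - x)"
    by (rule field_differentiable_bound[OF convex_cball df bnd yin xin])
  show ?thesis
  proof (cases "y = x")
    case True then show ?thesis using e0 by (intro exI[of _ 0]) (simp add: e_def)
  next
    case False
    define \<eta> where "\<eta> = (poly p (exp y) - poly p (exp x)) / (of_real L * (y - x)) - 1"
    have eq: "\<eta> = (f y - f x) / (of_real L * (y - x))"
    proof -
      have nz: "of_real L * (y - x) \<noteq> 0" using False Lpos by simp
      have "f y - f x = (poly p (exp y) - poly p (exp x)) - of_real L * (y - x)"
        by (simp add: f_def algebra_simps)
      then show ?thesis using nz by (simp add: \<eta>_def diff_divide_distrib)
    qed
    have "cmod \<eta> = cmod (f y - f x) / (L * cmod (y - x))"
      using Lpos by (simp add: eq norm_divide norm_mult)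
    also have "\<dots> \<le> e" using fb Lpos False
      by (simp add: divide_le_eq mult.commute mult.left_commute)
    finally have ne: "cmod \<eta> \<le> e" .
    have ne2: "cmod \<eta> < 1/2" using ne small unfolding e_def by linarith
    have nz: "1 + \<eta> \<noteq> 0"
    proof
      assume "1 + \<eta> = 0" then have "\<eta> = -1" by (simp add: add_eq_0_iff)
      with ne2 show False by simp
    qed
    have "poly p (exp y) - poly p (exp x) = of_real L * (y - x) * (1 + \<eta>)"
    proof -
      have nz: "of_real L * (y - x) \<noteq> 0" using False Lpos by simp
      have h: "1 + \<eta> = (poly p (exp y) - poly p (exp x)) / (of_real L * (y - x))"
        by (simp add: \<eta>_def)
      have gen: "\<And>D P::complex. D \<noteq> 0 \<Longrightarrow> P = D * (P / D)" by simp
      show ?thesis unfolding h by (rule gen[OF nz])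
    qed
    also have "1 + \<eta> = exp (Ln (1 + \<eta>))" using nz by simp
    finally show ?thesis
      using norm_Ln_le[OF ne2] ne by (intro exI[of _ "Ln (1 + \<eta>)"]) (simp add: L_def e_def)
  qed
qed





lemma potF_quad:
  assumes "d \<ge> 1" "x \<ge> 0" shows "potF d x \<ge> x + x\<^sup>2 / 2"
proof -
  have "x \<le> real d * x" using assms by (simp add: mult_le_cancel_right1)
  hence e: "exp x \<le> exp (real d * x)" by (simp only: exp_le_cancel_iff)
  moreover have "1 + x + x\<^sup>2 / 2 \<le> exp x" using exp_lower_Taylor_quadratic assms(2) by blast
  moreover have "potF d x = exp (real d * x) - 1" by (simp add: potF_def)
  ultimately show ?thesis by linarith
qed

lemma potF_ge3:
  assumes "d \<ge> 1" "x \<ge> 3" shows "potF d x \<ge> x + 3"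
proof -
  have "3 * 3 \<le> x * x" using assms(2) by (intro mult_mono) auto
  hence "x\<^sup>2 / 2 \<ge> 3" by (simp add: power2_eq_square)
  moreover have "x + x\<^sup>2 / 2 \<le> potF d x" using potF_quad[OF assms(1)] assms(2) by simp
  ultimately show ?thesis by linarith
qed

lemma iter_ge:
  assumes "d \<ge> 1" "x \<ge> 3" shows "(potF d ^^ r) x \<ge> x + 3 * r"
proof (induction r)
  case 0 then show ?case by simp
next
  case (Suc r)
  have "(potF d ^^ Suc r) x = potF d ((potF d ^^ r) x)" by simp
  also have "\<dots> \<ge> (potF d ^^ r) x + 3" using potF_ge3[OF assms(1)] Suc assms(2) by auto
  finally show ?case using Suc by simp
qed

lemma deriv_iter:
  "((potF d ^^ n) has_real_derivative (\<Prod>q<n. real d * exp (real d * (potF d ^^ q) x))) (at x)"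
proof (induction n)
  case 0 then show ?case by (simp add: DERIV_ident[unfolded id_def] id_def)
next
  case (Suc n)
  have dF: "(potF d has_real_derivative real d * exp (real d * y)) (at y)" for y
    unfolding potF_def by (auto intro!: derivative_eq_intros)
  have "((potF d \<circ> (potF d ^^ n)) has_real_derivative
          real d * exp (real d * (potF d ^^ n) x) * (\<Prod>q<n. real d * exp (real d * (potF d ^^ q) x))) (at x)"
    by (rule DERIV_chain[OF dF Suc])
  then show ?case by (simp add: comp_def mult.commute)
qed

lemma half_sum: "(\<Sum>q<n. (1/2::real) ^ Suc q) = 1 - (1/2) ^ n"
  by (induction n) (auto simp: field_simps)

lemma final_alg:
  fixes A W Z Lam D S N :: complex
  assumes "D \<noteq> 0" "S \<noteq> 0" "N \<noteq> 0" and "W - Z = A * D * exp Lam"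
  shows "A = 2 * complex_of_real pi * \<i> * S / (N * D) * exp (- Lam) * (N * (W - Z) / (2 * complex_of_real pi * \<i> * S))"
  using assms by (simp add: exp_minus field_simps)

lemma step_alg:
  fixes A x y x' y' Lam lam :: complex and P L :: real
  assumes "y - x = A * of_real P * exp Lam" "y' - x' = of_real L * (y - x) * exp lam"
  shows "y' - x' = A * of_real (P * L) * exp (Lam + lam)"
  using assms by (simp add: exp_add algebra_simps)


theorem mainTheorem5:
  fixes d m :: nat
    and p :: "complex poly"
    and f0 :: "complex \<Rightarrow> complex"
    and a :: "nat \<Rightarrow> nat \<Rightarrow> complex"
    and t :: "nat \<Rightarrow> nat \<Rightarrow> real"
    and s :: "nat \<Rightarrow> nat \<Rightarrow> int"
  assumes d_pos: "d \<ge> 1"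
    and p_monic: "lead_coeff p = 1"
    and p_deg: "degree p = d"
    and f0_def: "f0 = (\<lambda>z. poly p (exp z))"
    and orbit: "\<And>i j. i \<in> {1..m} \<Longrightarrow> a i (Suc j) = f0 (a i j)"
    and escape: "\<And>i. i \<in> {1..m} \<Longrightarrow> filterlim (\<lambda>j. cmod (a i j)) at_top sequentially"
    and pot_pos: "\<And>i j. i \<in> {1..m} \<Longrightarrow> t i j > 0"
    and pot_step: "\<And>i j. i \<in> {1..m} \<Longrightarrow> t i (Suc j) = potF d (t i j)"
    and asymp: "\<exists>C. \<forall>i\<in>{1..m}. \<forall>j.
        cmod (a i j - (of_real (t i j) + 2 * of_real pi * \<i> * of_int (s i j) / of_nat d))
          \<le> C * exp (- t i j / 2)"
    and distinct_rays: "\<And>i j k l. i \<in> {1..m} \<Longrightarrow> k \<in> {1..m} \<Longrightarrow>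
        (\<forall>n. s i (j + n) = s k (l + n)) \<Longrightarrow> i = k \<and> j = l"
  shows "\<exists>J. \<forall>j\<ge>J. \<forall>i\<in>{1..m}. \<forall>k\<in>{1..m}. \<forall>l.
           a i j \<noteq> a k l \<and> same_cluster t s i j k l \<longrightarrow>
           (let H = sepH t s i j k l; tt = t i j in
            \<exists>\<nu>\<in>Aset d tt (H - 1). \<exists>\<delta>\<in>Dset d a s i (j + H) k (l + H).
              a k l - a i j =
                2 * of_real pi * \<i> * of_int (s k (l + H) - s i (j + H))
                  / (of_nat d * of_real (deriv (potF d ^^ H) tt)) * \<nu> * \<delta>)"
proof -
  obtain C where C: "\<forall>i\<in>{1..m}. \<forall>j.
        cmod (a i j - (of_real (t i j) + 2 * of_real pi * \<i> * of_int (s i j) / of_nat d))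
          \<le> C * exp (- t i j / 2)" using asymp by blast
  define C0 where "C0 = \<bar>C\<bar>"
  have C0: "C0 \<ge> 0" by (simp add: C0_def)
  have C0b: "cmod (a i j - (of_real (t i j) + 2 * of_real pi * \<i> * of_int (s i j) / of_nat d))
          \<le> C0 * exp (- t i j / 2)" if "i \<in> {1..m}" for i j
  proof -
    have "C * exp (- t i j / 2) \<le> C0 * exp (- t i j / 2)"
      by (intro mult_right_mono) (auto simp: C0_def)
    moreover have "cmod (a i j - (of_real (t i j) + 2 * of_real pi * \<i> * of_int (s i j) / of_nat d))
          \<le> C * exp (- t i j / 2)" using C that by blast
    ultimately show ?thesis by linarith
  qed
  obtain K1 where K1: "K1 \<ge> 0" and Qb: "\<forall>w. 1 \<le> cmod w \<longrightarrow>
           cmod (poly (pderiv p) w * w - of_nat d * w ^ d) \<le> K1 * cmod w ^ (d - 1)"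
    using polyQ_bound[OF d_pos p_monic p_deg] by blast
  define K where "K = K1 * exp d + 3 * d * C0"
  have K0: "K \<ge> 0" using K1 C0 by (simp add: K_def)
  define T0 where "T0 = max 3 (max (6 * ln (2 * K + 1)) (2 * ln (d * C0 + 1)))"
  have T03: "T0 \<ge> 3" by (simp add: T0_def)
  have big: "1 \<le> x \<and> d * (C0 * exp (- x / 2)) \<le> 1 \<and> 2 * (K * exp (- x / 2)) < exp (- x / 3)
             \<and> exp (- x / 3) \<le> 1"
    if x: "x \<ge> T0" for x
  proof -
    have x3: "x \<ge> 3" using x T03 by linarith
    have x1: "x \<ge> 6 * ln (2 * K + 1)" "x \<ge> 2 * ln (d * C0 + 1)" using x by (auto simp: T0_def)
    have "exp (x / 2) \<ge> d * C0 + 1"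
    proof -
      have "d * C0 + 1 = exp (ln (d * C0 + 1))" by (rule exp_ln[symmetric]) (use C0 in \<open>auto intro!: add_nonneg_pos mult_nonneg_nonneg\<close>)
      also have "\<dots> \<le> exp (x / 2)" using x1 by simp
      finally show ?thesis .
    qed
    hence "d * C0 \<le> exp (x / 2)" by simp
    hence a2: "d * (C0 * exp (- x / 2)) \<le> 1"
      by (simp add: exp_minus field_simps)
    have "exp (x / 6) \<ge> 2 * K + 1"
    proof -
      have "2 * K + 1 = exp (ln (2 * K + 1))" by (rule exp_ln[symmetric]) (use K0 in \<open>auto intro!: add_nonneg_pos mult_nonneg_nonneg\<close>)
      also have "\<dots> \<le> exp (x / 6)" using x1 by simp
      finally show ?thesis .
    qed
    hence "2 * K < exp (x / 6)" by simp
    hence "2 * K * exp (- x / 2) < exp (x / 6) * exp (- x / 2)" by simp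
    also have "exp (x / 6) * exp (- x / 2) = exp (- x / 3)" by (simp flip: exp_add)
    finally have a3: "2 * (K * exp (- x / 2)) < exp (- x / 3)" by simp
    show ?thesis using x3 a2 a3 by simp
  qed
  have core: "let H = sepH t s i j k l; tt = t i j in
            \<exists>\<nu>\<in>Aset d tt (H - 1). \<exists>\<delta>\<in>Dset d a s i (j + H) k (l + H).
              a k l - a i j =
                2 * of_real pi * \<i> * of_int (s k (l + H) - s i (j + H))
                  / (of_nat d * of_real (deriv (potF d ^^ H) tt)) * \<nu> * \<delta>"
    if i: "i \<in> {1..m}" and k: "k \<in> {1..m}" and tT: "t i j \<ge> T0"
      and neq: "a i j \<noteq> a k l" and sc: "same_cluster t s i j k l" for i j k l
  proof -
    define tt where "tt = t i j"
    define tr where "tr = (\<lambda>r. (potF d ^^ r) tt)"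
    have tkl: "t k l = tt" using sc by (simp add: same_cluster_def tt_def)
    have trr: "t i (j + r) = tr r \<and> t k (l + r) = tr r" for r
    proof (induction r)
      case 0 then show ?case using tkl by (simp add: tr_def tt_def)
    next
      case (Suc r)
      then show ?case using pot_step[OF i, of "j + r"] pot_step[OF k, of "l + r"]
        by (simp add: tr_def)
    qed
    have exH: "\<exists>H. 0 < H \<and> \<not> same_cluster t s i (j + H) k (l + H)"
    proof (rule ccontr)
      assume "\<not> ?thesis"
      hence allsc: "\<forall>H. 0 < H \<longrightarrow> same_cluster t s i (j + H) k (l + H)" by blast
      have "\<forall>n. s i (j + n) = s k (l + n)"
      proof
        fix n show "s i (j + n) = s k (l + n)"
          using sc allsc by (cases n) (auto simp: same_cluster_def)
      qed
      from distinct_rays[OF i k this] have "i = k" "j = l" by auto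
      with neq show False by simp
    qed
    define H where "H = sepH t s i j k l"
    have H0: "0 < H" and Hsc: "\<not> same_cluster t s i (j + H) k (l + H)"
      using LeastI_ex[OF exH] by (auto simp: H_def sepH_def)
    have Hmin: "same_cluster t s i (j + r) k (l + r)" if "r < H" for r
    proof (cases "r = 0")
      case True then show ?thesis using sc by simp
    next
      case False
      show ?thesis
        using not_less_Least[of r "\<lambda>H. 0 < H \<and> \<not> same_cluster t s i (j + H) k (l + H)"] that False
        by (auto simp: H_def sepH_def)
    qed
    have sr: "s i (j + r) = s k (l + r)" if "r < H" for r
      using Hmin[OF that] by (simp add: same_cluster_def)
    have sH: "s k (l + H) - s i (j + H) \<noteq> 0"
      using Hsc trr[of H] by (simp add: same_cluster_def)
    have tt3: "tt \<ge> 3" using tT T03 by (simp add: tt_def)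
    have trT: "tr r \<ge> T0" for r
      using iter_ge[OF d_pos tt3, of r] tT by (simp add: tr_def tt_def)
    define b where "b = (\<lambda>q. 2 * (K * exp (- tr q / 2)))"
    define g where "g = (\<lambda>q. exp (- tr q / 3))"
    define LL where "LL = (\<lambda>q. real d * exp (real d * tr q))"
    have bg: "b q < g q" for q using big[OF trT[of q]] by (simp add: b_def g_def)
    have ind: "r \<le> H \<Longrightarrow> \<exists>Lam. a k (l + r) - a i (j + r) = (a k l - a i j) * of_real (\<Prod>q<r. LL q) * exp Lam
                   \<and> cmod Lam \<le> (\<Sum>q<r. b q)" for r
    proof (induction r)
      case 0 then show ?case by (intro exI[of _ 0]) simp
    next
      case (Suc r)
      then obtain Lam where L1: "a k (l + r) - a i (j + r) = (a k l - a i j) * of_real (\<Prod>q<r. LL q) * exp Lam"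
          and L2: "cmod Lam \<le> (\<Sum>q<r. b q)" by auto
      have rH: "r < H" using Suc by simp
      have bigr: "1 \<le> tr r" "d * (C0 * exp (- tr r / 2)) \<le> 1" "2 * (K * exp (- tr r / 2)) < exp (- tr r / 3)"
          "exp (- tr r / 3) \<le> 1"
        using big[OF trT[of r]] by auto
      have small: "2 * ((K1 * exp d + 3 * d * C0) * exp (- tr r / 2)) < 1"
      proof -
        have "2 * (K * exp (- tr r / 2)) < 1" using bigr(3,4) by linarith
        then show ?thesis by (simp add: K_def)
      qed
      have hx: "cmod (a i (j + r) - (of_real (tr r) + 2 * of_real pi * \<i> * of_int (s i (j + r)) / of_nat d))
          \<le> C0 * exp (- tr r / 2)" using C0b[OF i, of "j + r"] trr[of r] by simp
      have hy: "cmod (a k (l + r) - (of_real (tr r) + 2 * of_real pi * \<i> * of_int (s i (j + r)) / of_nat d))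
          \<le> C0 * exp (- tr r / 2)" using C0b[OF k, of "l + r"] trr[of r] sr[OF rH] by simp
      obtain lam where l1: "poly p (exp (a k (l + r))) - poly p (exp (a i (j + r)))
            = of_real (d * exp (d * tr r)) * (a k (l + r) - a i (j + r)) * exp lam"
          and l2: "cmod lam \<le> 2 * ((K1 * exp d + 3 * d * C0) * exp (- tr r / 2))"
        using step_lemma[OF d_pos K1 C0 Qb bigr(1) bigr(2) hx hy small] by blast
      have nx: "a k (l + Suc r) - a i (j + Suc r) = poly p (exp (a k (l + r))) - poly p (exp (a i (j + r)))"
        using orbit[OF i, of "j + r"] orbit[OF k, of "l + r"] by (simp add: f0_def)
      have e1: "a k (l + Suc r) - a i (j + Suc r) = (a k l - a i j) * of_real ((\<Prod>q<r. LL q) * LL r) * exp (Lam + lam)"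
        using step_alg[OF L1 l1[folded nx]] unfolding LL_def by simp
      show ?case
      proof (intro exI[of _ "Lam + lam"] conjI)
        show "a k (l + Suc r) - a i (j + Suc r) = (a k l - a i j) * of_real (\<Prod>q<Suc r. LL q) * exp (Lam + lam)"
          using e1 by simp
        have "cmod (Lam + lam) \<le> cmod Lam + cmod lam" by (rule norm_triangle_ineq)
        also have "\<dots> \<le> (\<Sum>q<r. b q) + b r" using L2 l2 by (simp add: b_def K_def)
        finally show "cmod (Lam + lam) \<le> (\<Sum>q<Suc r. b q)" by simp
      qed
    qed
    obtain Lam where Lam1: "a k (l + H) - a i (j + H) = (a k l - a i j) * of_real (\<Prod>q<H. LL q) * exp Lam"
      and Lam2: "cmod Lam \<le> (\<Sum>q<H. b q)" using ind[of H] by auto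
    have sumbg: "(\<Sum>q<H. b q) < (\<Sum>q<H. g q)"
      using H0 bg by (intro sum_strict_mono) auto
    have gsum: "(\<Sum>q<H. g q) < 1"
    proof -
      have "g q \<le> (1/2) ^ Suc q" for q
      proof -
        have "- tr q / 3 \<le> - 1 - real q" using iter_ge[OF d_pos tt3, of q] tt3 by (simp add: tr_def)
        hence "g q \<le> exp (- 1 - real q)" by (simp add: g_def)
        also have "exp (- 1 - real q) = exp (- 1) ^ Suc q"
        proof -
          have "exp (- 1 - real q) = exp (real (Suc q) * (- 1))" by (simp add: algebra_simps)
          also have "\<dots> = exp (- 1) ^ Suc q" by (rule exp_of_nat_mult)
          finally show ?thesis .
        qed
        also have "\<dots> \<le> (1/2) ^ Suc q"
        proof (rule power_mono)
          have "2 \<le> exp (1::real)" using exp_ge_add_one_self[of 1] by simp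
          then show "exp (- 1) \<le> (1/2::real)" by (simp add: exp_minus field_simps)
        qed simp
        finally show ?thesis .
      qed
      hence "(\<Sum>q<H. g q) \<le> (\<Sum>q<H. (1/2::real) ^ Suc q)" by (intro sum_mono) auto
      also have "\<dots> = 1 - (1/2) ^ H" by (rule half_sum)
      also have "\<dots> < 1" by simp
      finally show ?thesis .
    qed
    have Hset: "{0..H - 1} = {..<H}" using H0 by auto
    have Dval: "deriv (potF d ^^ H) tt = (\<Prod>q<H. LL q)"
      using DERIV_imp_deriv[OF deriv_iter[where d=d and n=H and x=tt]] by (simp add: LL_def tr_def)
    have Dpos: "(\<Prod>q<H. LL q) > 0" using d_pos by (intro prod_pos) (simp add: LL_def)
    define \<nu> where "\<nu> = exp (- Lam)"
    define \<delta> where "\<delta> = of_nat d * (a k (l + H) - a i (j + H)) / (2 * of_real pi * \<i> * of_int (s k (l + H) - s i (j + H)))"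
    have ReL: "\<bar>Re Lam\<bar> < (\<Sum>q<H. g q)" "\<bar>Im Lam\<bar> < (\<Sum>q<H. g q)"
      using abs_Re_le_cmod[of Lam] abs_Im_le_cmod[of Lam] Lam2 sumbg by linarith+
    have nuA: "\<nu> \<in> Aset d tt (H - 1)"
    proof -
      have n0: "\<nu> \<noteq> 0" by (simp add: \<nu>_def)
      have ln: "ln (cmod \<nu>) = - Re Lam" by (simp add: \<nu>_def)
      have "- pi < Im (- Lam)" "Im (- Lam) \<le> pi"
        using ReL(2) gsum pi_gt3 by auto
      hence "Ln \<nu> = - Lam" unfolding \<nu>_def by (rule Ln_exp)
      hence arg: "Arg \<nu> = - Im Lam" using n0 by (simp add: Arg_def)
      have "(\<Sum>r = 0..H - 1. exp (- ((potF d ^^ r) tt) / 3)) = (\<Sum>q<H. g q)"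
        unfolding Hset by (simp add: g_def tr_def)
      then show ?thesis using n0 ln arg ReL unfolding Aset_def by simp
    qed
    have deltaD: "\<delta> \<in> Dset d a s i (j + H) k (l + H)"
    proof -
      have "a k (l + H) \<in> ball (a k (l + H)) (1 / real (l + H))" using H0 by simp
      moreover have "a i (j + H) \<in> ball (a i (j + H)) (1 / real (j + H))" using H0 by simp
      ultimately show ?thesis unfolding Dset_def \<delta>_def by blast
    qed
    have Dnz: "(of_real (\<Prod>q<H. LL q) :: complex) \<noteq> 0" using Dpos by (metis of_real_eq_0_iff less_irrefl)
    have Snz: "(of_int (s k (l + H) - s i (j + H)) :: complex) \<noteq> 0" using sH by simp
    have Nnz: "(of_nat d :: complex) \<noteq> 0" using d_pos by simp
    have eq: "a k l - a i j = 2 * of_real pi * \<i> * of_int (s k (l + H) - s i (j + H))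
                  / (of_nat d * of_real (deriv (potF d ^^ H) tt)) * \<nu> * \<delta>"
      unfolding \<nu>_def \<delta>_def Dval
      by (rule final_alg[OF Dnz Snz Nnz Lam1])
    show ?thesis unfolding Let_def H_def[symmetric] tt_def[symmetric]
      using nuA deltaD eq by blast
  qed
  have ev: "\<forall>\<^sub>F j in sequentially. \<forall>i\<in>{1..m}. t i j \<ge> T0"
  proof (rule eventually_ball_finite)
    show "finite {1..m}" by simp
    show "\<forall>i\<in>{1..m}. \<forall>\<^sub>F j in sequentially. T0 \<le> t i j"
    proof
      fix i assume i: "i \<in> {1..m}"
      define x0 where "x0 = t i 0"
      have x0: "x0 > 0" using pot_pos[OF i] by (simp add: x0_def)
      have lin: "t i j \<ge> x0 + real j * (x0\<^sup>2 / 2)" for j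
      proof (induction j)
        case 0 then show ?case by (simp add: x0_def)
      next
        case (Suc j)
        have tj: "t i j \<ge> x0" using Suc x0 by (smt (verit) mult_nonneg_nonneg of_nat_0_le_iff zero_le_power2 divide_nonneg_pos)
        have "t i (Suc j) \<ge> t i j + (t i j)\<^sup>2 / 2" using potF_quad[OF d_pos, of "t i j"] pot_step[OF i, of j] tj x0 by simp
        moreover have "(t i j)\<^sup>2 \<ge> x0\<^sup>2" using tj x0 by (intro power_mono) auto
        moreover have "real (Suc j) * (x0\<^sup>2 / 2) = real j * (x0\<^sup>2 / 2) + x0\<^sup>2 / 2"
          by (simp add: algebra_simps)
        ultimately show ?case using Suc by linarith
      qed
      have "\<forall>\<^sub>F j in sequentially. real j \<ge> T0 / (x0\<^sup>2 / 2)"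
        by (rule eventually_ge_at_top[THEN eventually_mono, of "nat \<lceil>T0 / (x0\<^sup>2 / 2)\<rceil>"]) linarith
      then show "\<forall>\<^sub>F j in sequentially. T0 \<le> t i j"
      proof (rule eventually_mono)
        fix j assume "T0 / (x0\<^sup>2 / 2) \<le> real j"
        hence "T0 \<le> real j * (x0\<^sup>2 / 2)" using x0 by (simp add: divide_le_eq)
        then show "T0 \<le> t i j" using lin[of j] x0 by linarith
      qed
    qed
  qed
  then obtain J where J: "\<And>j. j \<ge> J \<Longrightarrow> \<forall>i\<in>{1..m}. t i j \<ge> T0"
    unfolding eventually_sequentially by blast
  show ?thesis
  proof (intro exI[of _ J] allI impI ballI)
    fix j i k l assume "J \<le> j" "i \<in> {1..m}" "k \<in> {1..m}" "a i j \<noteq> a k l \<and> same_cluster t s i j k l"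
    then show "let H = sepH t s i j k l; tt = t i j in
            \<exists>\<nu>\<in>Aset d tt (H - 1). \<exists>\<delta>\<in>Dset d a s i (j + H) k (l + H).
              a k l - a i j =
                2 * of_real pi * \<i> * of_int (s k (l + H) - s i (j + H))
                  / (of_nat d * of_real (deriv (potF d ^^ H) tt)) * \<nu> * \<delta>"
      using core J by blast
  qed
qed

end
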